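(* Let $\alpha\in(1,\infty)$, let $p_X$ be a distribution on a finite set $\mathcal X$ and $p_{Y\mid X}$ a channel to a finite set $\mathcal Y$, and define for channels $\tilde q_{Y\mid X}$ and reverse channels $r_{X\mid Y}$ $$\tilde F_\alpha^{\mathrm C}(\tilde q_{Y\mid X},r_{X\mid Y}):=\frac{\alpha}{1-\alpha}D(p_X\tilde q_{Y\mid X}\|p_Xp_{Y\mid X})+\mathbb E^{p_X\tilde q_{Y\mid X}}\!\left[\log\frac{r_{X\mid Y}(X\mid Y)}{p_X(X)}\right].$$ Then: (1) for fixed $\tilde q_{Y\mid X}$, $r_{X\mid Y}\mapsto\tilde F_\alpha^{\mathrm C}(\tilde q_{Y\mid X},r_{X\mid Y})$ is maximized by $r^*_{X\mid Y}(x\mid y)=\frac{p_X(x)\tilde q_{Y\mid X}(y\mid x)}{\sum_{x'}p_X(x')\tilde q_{Y\mid X}(y\mid x')}$; (2) for fixed $r_{X\mid Y}$, $\tilde q_{Y\mid X}\mapsto\tilde F_\alpha^{\mathrm C}(\tilde q_{Y\mid X},r_{X\mid Y})$ is maximized by $\tilde q^*_{Y\mid X}(y\mid x)=\frac{p_{Y\mid X}(y\mid x)r_{X\mid Y}(x\mid y)^{1-1/\alpha}}{\sum_{y'}p_{Y\mid X}(y'\mid x)r_{X\mid Y}(x\mid y')^{1-1/\alpha}}$.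
   Context: $\log$ is natural; $D$ is the Kullback–Leibler divergence. A channel $\tilde q_{Y\mid X}$ is a family $\{\tilde q_{Y\mid X}(\cdot\mid x)\}_{x\in\mathcal X}$ of distributions on $\mathcal Y$; a reverse channel $r_{X\mid Y}$ is a family $\{r_{X\mid Y}(\cdot\mid y)\}_{y\in\mathcal Y}$ of distributions on $\mathcal X$. $p_X\tilde q_{Y\mid X}$ denotes the joint distribution $p_X(x)\tilde q_{Y\mid X}(y\mid x)$. *)

theory Defs
  imports "HOL-Analysis.Analysis"
begin

definition is_dist :: "('a::finite \<Rightarrow> real) \<Rightarrow> bool" where
  "is_dist P \<longleftrightarrow> (\<forall>a. 0 \<le> P a) \<and> (\<Sum>a\<in>UNIV. P a) = 1"

text \<open>A channel W : X -> Y, W x y = W(y|x).  A reverse channel r : Y -> X is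
  a channel with the roles swapped, r y x = r(x|y).\<close>
definition is_channel :: "('a::finite \<Rightarrow> 'b::finite \<Rightarrow> real) \<Rightarrow> bool" where
  "is_channel W \<longleftrightarrow> (\<forall>x. is_dist (W x))"

definition kl_div :: "('a::finite \<Rightarrow> real) \<Rightarrow> ('a \<Rightarrow> real) \<Rightarrow> ereal" where
  "kl_div P Q =
     (if (\<forall>a. Q a = 0 \<longrightarrow> P a = 0)
      then ereal (\<Sum>a\<in>UNIV. if P a = 0 then 0 else P a * ln (P a / Q a))
      else \<infinity>)"

definition F_C :: "real \<Rightarrow> ('x::finite \<Rightarrow> real) \<Rightarrow> ('x \<Rightarrow> 'y::finite \<Rightarrow> real)
                   \<Rightarrow> ('x \<Rightarrow> 'y \<Rightarrow> real) \<Rightarrow> ('y \<Rightarrow> 'x \<Rightarrow> real) \<Rightarrow> ereal" where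
  "F_C \<alpha> pX pYX q r =
     ereal (\<alpha> / (1 - \<alpha>)) * kl_div (\<lambda>(x, y). pX x * q x y) (\<lambda>(x, y). pX x * pYX x y)
     + (\<Sum>(x, y)\<in>UNIV.
          if pX x * q x y = 0 then 0
          else if r y x = 0 then -\<infinity>
          else ereal (pX x * q x y * ln (r y x / pX x)))"

end

theory Submission
  imports Defs
begin
lemma sum_Minfty_ereal:
  fixes f :: "'a \<Rightarrow> ereal"
  assumes "finite A" "\<forall>i\<in>A. f i \<noteq> \<infinity>" "i \<in> A" "f i = -\<infinity>"
  shows "sum f A = -\<infinity>"
  using assms
proof (induct A rule: finite_induct)
  case (insert x A)
  have s: "sum f A \<noteq> \<infinity>" using insert by (simp add: sum_Pinfty)
  show ?case
  proof (cases "x = i")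
    case True then show ?thesis using insert s by simp
  next
    case False then have "sum f A = -\<infinity>" using insert by auto
    then show ?thesis using insert False by (cases "f x") auto
  qed
qed simp

lemma pair_sum: "(\<Sum>(x,y)\<in>UNIV. f x y) = (\<Sum>x\<in>UNIV. \<Sum>y\<in>UNIV. (f x y :: real))"
  by (simp only: sum.cartesian_product UNIV_Times_UNIV)

lemma pair_sum': "(\<Sum>(x,y)\<in>UNIV. f x y) = (\<Sum>y\<in>UNIV. \<Sum>x\<in>UNIV. (f x y :: real))"
  unfolding pair_sum by (rule sum.swap)

definition Gd :: "('x::finite \<Rightarrow> real) \<Rightarrow> ('x \<Rightarrow> 'y::finite \<Rightarrow> real) \<Rightarrow> ('x \<Rightarrow> 'y \<Rightarrow> real) \<Rightarrow> ('y \<Rightarrow> 'x \<Rightarrow> real) \<Rightarrow> bool" where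
  "Gd pX pYX q r \<longleftrightarrow> (\<forall>x y. pX x * q x y \<noteq> 0 \<longrightarrow> pX x * pYX x y \<noteq> 0 \<and> r y x \<noteq> 0)"

definition FR :: "real \<Rightarrow> ('x::finite \<Rightarrow> real) \<Rightarrow> ('x \<Rightarrow> 'y::finite \<Rightarrow> real) \<Rightarrow> ('x \<Rightarrow> 'y \<Rightarrow> real) \<Rightarrow> ('y \<Rightarrow> 'x \<Rightarrow> real) \<Rightarrow> real" where
  "FR \<alpha> pX pYX q r = (\<Sum>(x,y)\<in>UNIV. if pX x * q x y = 0 then 0 else
      \<alpha>/(1-\<alpha>) * (pX x * q x y * ln (pX x * q x y / (pX x * pYX x y))) + pX x * q x y * ln (r y x / pX x))"

lemma F_good:
  assumes "Gd pX pYX q r"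
  shows "F_C \<alpha> pX pYX q r = ereal (FR \<alpha> pX pYX q r)"
proof -
  have kl: "kl_div (\<lambda>(x, y). pX x * q x y) (\<lambda>(x, y). pX x * pYX x y) =
     ereal (\<Sum>(x,y)\<in>UNIV. if pX x * q x y = 0 then 0 else pX x * q x y * ln (pX x * q x y / (pX x * pYX x y)))"
    using assms unfolding kl_div_def Gd_def
    by (auto intro!: sum.cong)
  have s: "(\<Sum>(x, y)\<in>UNIV.
          if pX x * q x y = 0 then 0
          else if r y x = 0 then -\<infinity>
          else ereal (pX x * q x y * ln (r y x / pX x))) =
      ereal (\<Sum>(x,y)\<in>UNIV. if pX x * q x y = 0 then 0 else pX x * q x y * ln (r y x / pX x))"
    unfolding sum_ereal[symmetric]
    by (rule sum.cong) (use assms in \<open>auto simp: Gd_def\<close>)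
  show ?thesis
    unfolding F_C_def kl s FR_def
    by (auto simp add: sum_distrib_left sum.distrib[symmetric] case_prod_beta intro!: sum.cong)
qed

lemma F_bad:
  assumes "1 < \<alpha>" "\<not> Gd pX pYX q r"
  shows "F_C \<alpha> pX pYX q r = -\<infinity>"
proof -
  let ?S = "(\<Sum>(x, y)\<in>UNIV.
          if pX x * q x y = 0 then 0
          else if r y x = 0 then -\<infinity>
          else ereal (pX x * q x y * ln (r y x / pX x)))"
  have Sni: "?S \<noteq> \<infinity>" by (simp add: sum_Pinfty split: if_splits)
  have c: "\<alpha> / (1 - \<alpha>) < 0" using assms(1) by (simp add: divide_pos_neg)
  show ?thesis
  proof (cases "\<forall>x y. pX x * q x y \<noteq> 0 \<longrightarrow> pX x * pYX x y \<noteq> 0")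
    case False
    then have "kl_div (\<lambda>(x, y). pX x * q x y) (\<lambda>(x, y). pX x * pYX x y) = \<infinity>"
      unfolding kl_div_def by auto
    then show ?thesis unfolding F_C_def using c Sni by (cases ?S) auto
  next
    case True
    then obtain x y where xy: "pX x * q x y \<noteq> 0" "r y x = 0" using assms(2) unfolding Gd_def by auto
    have "?S = -\<infinity>"
      by (rule sum_Minfty_ereal[where i="(x,y)"]) (use xy in \<open>auto split: if_splits\<close>)
    moreover have "kl_div (\<lambda>(x, y). pX x * q x y) (\<lambda>(x, y). pX x * pYX x y) \<noteq> \<infinity>"
      "kl_div (\<lambda>(x, y). pX x * q x y) (\<lambda>(x, y). pX x * pYX x y) \<noteq> -\<infinity>"
      using True unfolding kl_div_def by auto
    ultimately show ?thesis unfolding F_C_def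
      by (cases "kl_div (\<lambda>(x, y). pX x * q x y) (\<lambda>(x, y). pX x * pYX x y)") auto
  qed
qed

lemma part1:
  fixes pX :: "'x::finite \<Rightarrow> real" and pYX :: "'x \<Rightarrow> 'y::finite \<Rightarrow> real"
  assumes pX: "is_dist pX" and q: "is_channel q" and r: "is_channel r"
    and rs: "\<forall>x y. (\<Sum>x'\<in>UNIV. pX x' * q x' y) > 0 \<longrightarrow>
               rstar y x = pX x * q x y / (\<Sum>x'\<in>UNIV. pX x' * q x' y)"
    and G: "Gd pX pYX q r"
  shows "Gd pX pYX q rstar \<and> FR \<alpha> pX pYX q r \<le> FR \<alpha> pX pYX q rstar"
proof -
  define qY where "qY y = (\<Sum>x'\<in>UNIV. pX x' * q x' y)" for y
  have pX0: "0 \<le> pX x" for x using pX by (simp add: is_dist_def)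
  have q0: "0 \<le> q x y" for x y using q by (simp add: is_channel_def is_dist_def)
  have r0: "0 \<le> r y x" for x y using r by (simp add: is_channel_def is_dist_def)
  have r1: "(\<Sum>x\<in>UNIV. r y x) = 1" for y using r by (simp add: is_channel_def is_dist_def)
  have P0: "0 \<le> pX x * q x y" for x y using pX0 q0 by simp
  have key: "pX x * q x y \<noteq> 0 \<Longrightarrow> 0 < pX x * q x y \<and> 0 < qY y \<and> rstar y x = pX x * q x y / qY y \<and> 0 < rstar y x" for x y
  proof -
    assume ne: "pX x * q x y \<noteq> 0"
    then have Pp: "0 < pX x * q x y" using P0[of x y] by linarith
    have "pX x * q x y \<le> qY y" unfolding qY_def
      by (rule member_le_sum[where f="\<lambda>x'. pX x' * q x' y"]) (auto simp: P0)
    then have "0 < qY y" using Pp by linarith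
    then show ?thesis using rs Pp unfolding qY_def by auto
  qed
  have G2: "Gd pX pYX q rstar" using G key unfolding Gd_def by fastforce
  have pw: "(if pX x * q x y = 0 then 0 else
      \<alpha>/(1-\<alpha>) * (pX x * q x y * ln (pX x * q x y / (pX x * pYX x y))) + pX x * q x y * ln (r y x / pX x))
     \<le> (if pX x * q x y = 0 then 0 else
      \<alpha>/(1-\<alpha>) * (pX x * q x y * ln (pX x * q x y / (pX x * pYX x y))) + pX x * q x y * ln (rstar y x / pX x))
      + (qY y * r y x - pX x * q x y)" for x y
  proof (cases "pX x * q x y = 0")
    case True
    have "0 \<le> qY y" unfolding qY_def by (auto intro!: sum_nonneg simp: P0)
    then have "0 \<le> qY y * r y x" using r0[of y x] by simp
    then show ?thesis using True by auto
  next
    case False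
    note k = key[OF False]
    have rp: "0 < r y x" using G False r0[of y x] unfolding Gd_def by force
    have pXp: "0 < pX x" using False pX0[of x] by force
    have "ln (r y x / rstar y x) \<le> r y x / rstar y x - 1" using rp k by (intro ln_le_minus_one) auto
    also have "r y x / rstar y x = qY y * r y x / (pX x * q x y)" using k by (simp add: field_simps)
    finally have h: "pX x * q x y * ln (r y x / rstar y x) \<le> qY y * r y x - pX x * q x y"
      using k by (simp add: field_simps)
    have "ln (r y x / rstar y x) = ln (r y x) - ln (rstar y x)"
      "ln (r y x / pX x) = ln (r y x) - ln (pX x)"
      "ln (rstar y x / pX x) = ln (rstar y x) - ln (pX x)"
      using rp pXp k[THEN conjunct2, THEN conjunct2, THEN conjunct2] by (simp_all add: ln_div)
    then have "ln (r y x / rstar y x) = ln (r y x / pX x) - ln (rstar y x / pX x)" by linarith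
    then have e: "pX x * q x y * ln (r y x / pX x) = pX x * q x y * ln (rstar y x / pX x) + pX x * q x y * ln (r y x / rstar y x)"
      by (simp add: distrib_left[symmetric])
    show ?thesis using False h e by simp
  qed
  have "FR \<alpha> pX pYX q r \<le> FR \<alpha> pX pYX q rstar + (\<Sum>(x,y)\<in>UNIV. qY y * r y x - pX x * q x y)"
    unfolding FR_def sum.distrib[symmetric] case_prod_beta
    by (rule sum_mono) (use pw in auto)
  also have "(\<Sum>(x,y)\<in>UNIV. qY y * r y x - pX x * q x y) = 0"
    unfolding pair_sum' by (simp add: sum_subtractf sum_distrib_left[symmetric] r1 qY_def)
  finally show ?thesis using G2 by simp
qed

lemma part2:
  fixes pX :: "'x::finite \<Rightarrow> real" and pYX :: "'x \<Rightarrow> 'y::finite \<Rightarrow> real"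
  assumes alpha: "1 < \<alpha>" and pX: "is_dist pX" and pYX: "is_channel pYX"
    and q: "is_channel q" and r: "is_channel r" and qsc: "is_channel qstar"
    and qs: "\<forall>x y. (\<Sum>y'\<in>UNIV. pYX x y' * r y' x powr (1 - 1 / \<alpha>)) > 0 \<longrightarrow>
               qstar x y = pYX x y * r y x powr (1 - 1 / \<alpha>)
                           / (\<Sum>y'\<in>UNIV. pYX x y' * r y' x powr (1 - 1 / \<alpha>))"
    and G: "Gd pX pYX q r"
  shows "Gd pX pYX qstar r \<and> FR \<alpha> pX pYX q r \<le> FR \<alpha> pX pYX qstar r"
proof -
  define \<beta> where "\<beta> = 1 - 1 / \<alpha>"
  define c where "c = \<alpha> / (1 - \<alpha>)"
  define Z where "Z x = (\<Sum>y'\<in>UNIV. pYX x y' * r y' x powr \<beta>)" for x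
  define K where "K x = - c * ln (Z x) - ln (pX x)" for x
  have cneg: "c < 0" unfolding c_def using alpha by (simp add: divide_pos_neg)
  have cb: "c * \<beta> = -1" unfolding c_def \<beta>_def using alpha by (simp add: field_simps)
  have cbz: "\<beta> * (c * z) = - z" for z
    by (metis cb mult.assoc mult.commute mult_minus1)
  have pX0: "0 \<le> pX x" for x using pX by (simp add: is_dist_def)
  have pX1: "(\<Sum>x\<in>UNIV. pX x) = 1" using pX by (simp add: is_dist_def)
  have q0: "0 \<le> q x y" for x y using q by (simp add: is_channel_def is_dist_def)
  have q1: "(\<Sum>y\<in>UNIV. q x y) = 1" for x using q by (simp add: is_channel_def is_dist_def)
  have qs0: "0 \<le> qstar x y" for x y using qsc by (simp add: is_channel_def is_dist_def)
  have qs1: "(\<Sum>y\<in>UNIV. qstar x y) = 1" for x using qsc by (simp add: is_channel_def is_dist_def)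
  have pY0: "0 \<le> pYX x y" for x y using pYX by (simp add: is_channel_def is_dist_def)
  have r0: "0 \<le> r y x" for x y using r by (simp add: is_channel_def is_dist_def)
  have w0: "0 \<le> pYX x y * r y x powr \<beta>" for x y using pY0 by simp
  have Zpos: "0 < Z x" if "0 < pX x" for x
  proof -
    obtain y where y: "q x y \<noteq> 0"
      using q1[of x] by (metis (no_types, lifting) sum.neutral zero_neq_one)
    then have "pYX x y \<noteq> 0" "r y x \<noteq> 0" using G that unfolding Gd_def by auto
    then have "0 < pYX x y * r y x powr \<beta>" using pY0[of x y] r0[of y x] by simp
    also have "\<dots> \<le> Z x" unfolding Z_def
      by (rule member_le_sum[where f="\<lambda>y'. pYX x y' * r y' x powr \<beta>"]) (auto simp: w0)
    finally show ?thesis .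
  qed
  have qsx: "qstar x y = pYX x y * r y x powr \<beta> / Z x" if "0 < pX x" for x y
    using qs Zpos[OF that] unfolding Z_def \<beta>_def by auto
  have G2: "Gd pX pYX qstar r"
    unfolding Gd_def
  proof (intro allI impI)
    fix x y assume a: "pX x * qstar x y \<noteq> 0"
    then have "0 < pX x" using pX0[of x] by force
    then show "pX x * pYX x y \<noteq> 0 \<and> r y x \<noteq> 0" using a qsx by auto
  qed
  define T where "T qq x y = (if pX x * qq x y = 0 then 0 else
      \<alpha>/(1-\<alpha>) * (pX x * qq x y * ln (pX x * qq x y / (pX x * pYX x y))) + pX x * qq x y * ln (r y x / pX x))"
    for qq x y
  have Tstar: "T qstar x y = pX x * qstar x y * K x" for x y
  proof (cases "pX x * qstar x y = 0")
    case True then show ?thesis unfolding T_def by simp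
  next
    case False
    then have px: "0 < pX x" and qn: "qstar x y \<noteq> 0" using pX0[of x] by force+
    have Zp: "0 < Z x" using Zpos[OF px] .
    have qse: "qstar x y = pYX x y * r y x powr \<beta> / Z x" using qsx[OF px] .
    have rp: "0 < r y x" and pyp: "0 < pYX x y" using qn qse r0[of y x] pY0[of x y] by (auto simp: less_le)
    have l1: "ln (pX x * qstar x y / (pX x * pYX x y)) = \<beta> * ln (r y x) - ln (Z x)"
      using px Zp rp pyp qse by (simp add: ln_div ln_mult ln_powr)
    have l2: "ln (r y x / pX x) = ln (r y x) - ln (pX x)" using rp px by (simp add: ln_div)
    have "T qstar x y = c * (pX x * qstar x y * (\<beta> * ln (r y x) - ln (Z x))) + pX x * qstar x y * (ln (r y x) - ln (pX x))"
      unfolding T_def c_def[symmetric] l1[symmetric] l2[symmetric] using False by simp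
    also have "\<dots> = pX x * qstar x y * (c * (\<beta> * ln (r y x) - ln (Z x)) + ln (r y x) - ln (pX x))"
      by (simp add: algebra_simps)
    also have "c * (\<beta> * ln (r y x) - ln (Z x)) + ln (r y x) - ln (pX x) = K x"
      unfolding K_def using cb by (simp add: algebra_simps mult.assoc[symmetric])
    finally show ?thesis .
  qed
  have Tq: "T q x y \<le> pX x * (q x y * K x + c * (q x y - qstar x y))" for x y
  proof (cases "pX x = 0")
    case True then show ?thesis unfolding T_def by simp
  next
    case False
    then have px: "0 < pX x" using pX0[of x] by force
    have Zp: "0 < Z x" using Zpos[OF px] .
    have qse: "qstar x y = pYX x y * r y x powr \<beta> / Z x" using qsx[OF px] .
    show ?thesis
    proof (cases "q x y = 0")
      case True
      have "0 \<le> pX x * (c * (- qstar x y))" using px cneg qs0[of x y]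
        by (simp add: mult_nonpos_nonpos) (meson less_imp_le mult_nonneg_nonpos mult_nonpos_nonneg)
      then show ?thesis using True unfolding T_def by simp
    next
      case qn: False
      then have qp: "0 < q x y" using q0[of x y] by force
      have "pX x * pYX x y \<noteq> 0 \<and> r y x \<noteq> 0" using G px qn unfolding Gd_def by auto
      then have rp: "0 < r y x" and pyp: "0 < pYX x y" using r0[of y x] pY0[of x y] by (auto simp: less_le)
      define t where "t = qstar x y / q x y"
      have tp: "0 < t" unfolding t_def using qse qp rp pyp Zp by simp
      have lt: "ln t = ln (pYX x y) + \<beta> * ln (r y x) - ln (Z x) - ln (q x y)"
        unfolding t_def qse using qp rp pyp Zp by (simp add: ln_div ln_mult ln_powr)
      have "ln t \<le> t - 1" using tp by (rule ln_le_minus_one)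
      then have H: "q x y * ln t \<le> qstar x y - q x y"
        using qp unfolding t_def by (simp add: field_simps)
      have H2: "c * pX x * (qstar x y - q x y) \<le> c * pX x * (q x y * ln t)"
        using H cneg px by (intro mult_left_mono_neg) (auto intro: less_imp_le mult_neg_pos)
      have l1: "ln (pX x * q x y / (pX x * pYX x y)) = ln (q x y) - ln (pYX x y)"
        using px qp pyp by (simp add: ln_div ln_mult)
      have l2: "ln (r y x / pX x) = ln (r y x) - ln (pX x)" using rp px by (simp add: ln_div)
      have e1: "T q x y = c * pX x * q x y * (ln (q x y) - ln (pYX x y)) + pX x * q x y * (ln (r y x) - ln (pX x))"
        unfolding T_def using px qp l1 l2 c_def by simp
      have e2: "c * pX x * (q x y * ln t) = c * pX x * q x y * ln (pYX x y) - pX x * q x y * ln (r y x)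
                 - c * pX x * q x y * ln (Z x) - c * pX x * q x y * ln (q x y)"
        unfolding lt by (simp add: algebra_simps cbz)
      have e3: "pX x * (q x y * K x + c * (q x y - qstar x y)) =
          - c * pX x * q x y * ln (Z x) - pX x * q x y * ln (pX x) + c * pX x * q x y - c * pX x * qstar x y"
        unfolding K_def by (simp add: algebra_simps)
      have e4: "c * pX x * (qstar x y - q x y) = c * pX x * qstar x y - c * pX x * q x y"
        by (simp add: algebra_simps)
      have e5: "c * pX x * q x y * (ln (q x y) - ln (pYX x y)) + pX x * q x y * (ln (r y x) - ln (pX x))
         = c * pX x * q x y * ln (q x y) - c * pX x * q x y * ln (pYX x y) + pX x * q x y * ln (r y x) - pX x * q x y * ln (pX x)"
        by (simp add: algebra_simps)
      show ?thesis using H2 e1 e2 e3 e4 e5 by linarith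
    qed
  qed
  have "FR \<alpha> pX pYX q r = (\<Sum>(x,y)\<in>UNIV. T q x y)" unfolding FR_def T_def by simp
  also have "\<dots> \<le> (\<Sum>(x,y)\<in>UNIV. pX x * (q x y * K x + c * (q x y - qstar x y)))"
    by (rule sum_mono) (use Tq in auto)
  also have "\<dots> = (\<Sum>x\<in>UNIV. pX x * K x)"
    unfolding pair_sum
    by (simp add: distrib_left distrib_right sum.distrib sum_subtractf right_diff_distrib
         sum_distrib_left[symmetric] sum_distrib_right[symmetric] q1 qs1 mult.assoc)
  also have "\<dots> = (\<Sum>(x,y)\<in>UNIV. T qstar x y)"
    unfolding pair_sum Tstar
    by (simp add: sum_distrib_left[symmetric] sum_distrib_right[symmetric] qs1 mult.assoc mult.commute[of "qstar _ _"])
  also have "\<dots> = FR \<alpha> pX pYX qstar r" unfolding FR_def T_def by simp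
  finally show ?thesis using G2 by simp
qed

theorem proposition3:
  fixes \<alpha> :: real
    and pX :: "'x::finite \<Rightarrow> real"
    and pYX :: "'x \<Rightarrow> 'y::finite \<Rightarrow> real"
  assumes alpha: "1 < \<alpha>"
    and pX: "is_dist pX"
    and pYX: "is_channel pYX"
  shows
    "(\<forall>q r rstar. is_channel q \<and> is_channel r \<and> is_channel rstar \<and>
        (\<forall>x y. (\<Sum>x'\<in>UNIV. pX x' * q x' y) > 0 \<longrightarrow>
               rstar y x = pX x * q x y / (\<Sum>x'\<in>UNIV. pX x' * q x' y))
      \<longrightarrow> F_C \<alpha> pX pYX q r \<le> F_C \<alpha> pX pYX q rstar)
   \<and>
    (\<forall>r q qstar. is_channel r \<and> is_channel q \<and> is_channel qstar \<and>
        (\<forall>x y. (\<Sum>y'\<in>UNIV. pYX x y' * r y' x powr (1 - 1 / \<alpha>)) > 0 \<longrightarrow>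
               qstar x y = pYX x y * r y x powr (1 - 1 / \<alpha>)
                           / (\<Sum>y'\<in>UNIV. pYX x y' * r y' x powr (1 - 1 / \<alpha>)))
      \<longrightarrow> F_C \<alpha> pX pYX q r \<le> F_C \<alpha> pX pYX qstar r)"
proof (intro conjI allI impI)
  fix q :: "'x \<Rightarrow> 'y \<Rightarrow> real" and r :: "'y \<Rightarrow> 'x \<Rightarrow> real" and rstar :: "'y \<Rightarrow> 'x \<Rightarrow> real"
  assume h: "is_channel q \<and> is_channel r \<and> is_channel rstar \<and>
        (\<forall>x y. (\<Sum>x'\<in>UNIV. pX x' * q x' y) > 0 \<longrightarrow>
               rstar y x = pX x * q x y / (\<Sum>x'\<in>UNIV. pX x' * q x' y))"
  show "F_C \<alpha> pX pYX q r \<le> F_C \<alpha> pX pYX q rstar"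
  proof (cases "Gd pX pYX q r")
    case True
    have R: "Gd pX pYX q rstar \<and> FR \<alpha> pX pYX q r \<le> FR \<alpha> pX pYX q rstar"
      by (rule part1[OF pX h[THEN conjunct1] h[THEN conjunct2, THEN conjunct1]
            h[THEN conjunct2, THEN conjunct2, THEN conjunct2] True])
    have "F_C \<alpha> pX pYX q r = ereal (FR \<alpha> pX pYX q r)" by (rule F_good[OF True])
    moreover have "F_C \<alpha> pX pYX q rstar = ereal (FR \<alpha> pX pYX q rstar)" by (rule F_good[OF R[THEN conjunct1]])
    ultimately show ?thesis using R[THEN conjunct2] by simp
  next
    case False then show ?thesis using F_bad[OF alpha False] by simp
  qed
next
  fix r :: "'y \<Rightarrow> 'x \<Rightarrow> real" and q :: "'x \<Rightarrow> 'y \<Rightarrow> real" and qstar :: "'x \<Rightarrow> 'y \<Rightarrow> real"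
  assume h: "is_channel r \<and> is_channel q \<and> is_channel qstar \<and>
        (\<forall>x y. (\<Sum>y'\<in>UNIV. pYX x y' * r y' x powr (1 - 1 / \<alpha>)) > 0 \<longrightarrow>
               qstar x y = pYX x y * r y x powr (1 - 1 / \<alpha>)
                           / (\<Sum>y'\<in>UNIV. pYX x y' * r y' x powr (1 - 1 / \<alpha>)))"
  show "F_C \<alpha> pX pYX q r \<le> F_C \<alpha> pX pYX qstar r"
  proof (cases "Gd pX pYX q r")
    case True
    have R: "Gd pX pYX qstar r \<and> FR \<alpha> pX pYX q r \<le> FR \<alpha> pX pYX qstar r"
      by (rule part2[OF alpha pX pYX h[THEN conjunct2, THEN conjunct1] h[THEN conjunct1]
            h[THEN conjunct2, THEN conjunct2, THEN conjunct1]
            h[THEN conjunct2, THEN conjunct2, THEN conjunct2] True])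
    have "F_C \<alpha> pX pYX q r = ereal (FR \<alpha> pX pYX q r)" by (rule F_good[OF True])
    moreover have "F_C \<alpha> pX pYX qstar r = ereal (FR \<alpha> pX pYX qstar r)" by (rule F_good[OF R[THEN conjunct1]])
    ultimately show ?thesis using R[THEN conjunct2] by simp
  next
    case False then show ?thesis using F_bad[OF alpha False] by simp
  qed
qed

end
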